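(* Let $r>1$. The Danilov fan $\Sigma(r,1)$ is obtained from the cone $\Delta(r,1)$ by successive weighted blow-ups (star subdivisions) at the rays through $p_{r-1},p_{r-2},\dots,p_1$, in this order. The Danilov fan $\Sigma(r,r-1)$ is obtained from $\Delta(r,r-1)$ by successive weighted blow-ups at the rays through $p_1,p_2,\dots,p_{r-1}$, in this order.
   Context: Notation: for integers $s$ and $t>0$, $\langle s\rangle_t$ is the least non-negative integer congruent to $s$ modulo $t$. A pair of integers $(r,a)$ is admissible if $r\ge1$, $0\le a<r$, $\gcd(r,a)=1$ (so $a=0$ only for $r=1$). For admissible $(r,a)$ put $N(r,a)=\mathbb Z^3+\mathbb Z\cdot\frac1r(1,a,r-a)\subset\mathbb Q^3$; $e_1,e_2,e_3$ is the standard basis and $\Delta(r,a)$ the cone spanned by $e_1,e_2,e_3$ (its toric variety is the singularity $\frac1r(1,a,r-a)$). Let $b$ be an inverse of $a$ modulo $r$ and $p_i=\frac1r(\langle -ib\rangle_r,r-i,i)$, $i=0,\dots,r$ (so $p_0=e_2$, $p_r=e_3$, $p_{r-a}=\frac1r(1,a,r-a)$). For $r>1$ let $(r_L,a_L)=(r-a,\langle r\rangle_{r-a})$, $(r_R,a_R)=(a,\langle -r\rangle_a)$; there are lattice isomorphisms $L:N(r_L,a_L)\to N(r,a)$, $R:N(r_R,a_R)\to N(r,a)$ with $L(e_1)=e_1$, $L(e_2)=e_2$, $L(e_3)=p_{r-a}$, $R(e_1)=e_1$, $R(e_2)=p_{r-a}$, $R(e_3)=e_3$. The Danilov fan $\Sigma(r,a)$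 is defined recursively: $\Sigma(1,0)$ is $\Delta(1,0)$ with its faces; for $r>1$, $\Sigma(r,a)$ consists of the cone spanned by $e_2,e_3,p_{r-a}$ with its faces, together with $L(\Sigma(r_L,a_L))$ and $R(\Sigma(r_R,a_R))$. The weighted blow-up of a fan at the ray through a lattice point $p$ is its star subdivision at $p$: each cone containing $p$ is replaced by the cones spanned by $p$ and the faces of that cone not containing $p$. *)

theory Defs
  imports "HOL-Analysis.Analysis"
begin

text \<open>Points of N(r,a) tensor R = R^3 are represented as triples of reals.
  A fan is represented as a set of cones, each cone being a subset of R^3.\<close>

type_synonym pt3 = "real \<times> real \<times> real"

definition e1 :: pt3 where "e1 = (1, 0, 0)"
definition e2 :: pt3 where "e2 = (0, 1, 0)"
definition e3 :: pt3 where "e3 = (0, 0, 1)"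

definition cone_span :: "pt3 set \<Rightarrow> pt3 set" where
  "cone_span S = {x. \<exists>V c. finite V \<and> V \<subseteq> S \<and> (\<forall>v\<in>V. c v \<ge> 0) \<and>
                            x = (\<Sum>v\<in>V. c v *\<^sub>R v)}"

definition faces :: "pt3 set \<Rightarrow> pt3 set set" where
  "faces \<sigma> = {\<tau>. \<tau> face_of \<sigma> \<and> \<tau> \<noteq> {}}"

text \<open>The cone Delta(r,a), spanned by e1, e2, e3 (the same real cone for every (r,a)).\<close>
definition Delta :: "pt3 set" where
  "Delta = cone_span {e1, e2, e3}"

definition star_sub :: "pt3 set set \<Rightarrow> pt3 \<Rightarrow> pt3 set set" where
  "star_sub F p = {\<sigma> \<in> F. p \<notin> \<sigma>} \<union>
     {cone_span (insert p \<tau>) | \<sigma> \<tau>. \<sigma> \<in> F \<and> p \<in> \<sigma> \<and> \<tau> \<in> faces \<sigma> \<and> p \<notin> \<tau>}"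

definition inv_mod :: "nat \<Rightarrow> nat \<Rightarrow> nat" where
  "inv_mod r a = (SOME b. (a * b) mod r = 1 mod r)"

definition pnt :: "nat \<Rightarrow> nat \<Rightarrow> nat \<Rightarrow> pt3" where
  "pnt r a i = (let b = inv_mod r a in
     (of_int ((- (int i * int b)) mod int r) / real r,
      (real r - real i) / real r,
      real i / real r))"

definition Lmap :: "nat \<Rightarrow> nat \<Rightarrow> pt3 \<Rightarrow> pt3" where
  "Lmap r a x = (case x of (x1, x2, x3) \<Rightarrow> x1 *\<^sub>R e1 + x2 *\<^sub>R e2 + x3 *\<^sub>R pnt r a (r - a))"

definition Rmap :: "nat \<Rightarrow> nat \<Rightarrow> pt3 \<Rightarrow> pt3" where
  "Rmap r a x = (case x of (x1, x2, x3) \<Rightarrow> x1 *\<^sub>R e1 + x2 *\<^sub>R pnt r a (r - a) + x3 *\<^sub>R e3)"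

text \<open>The first branch covers
  (1,0); other non-admissible arguments (a = 0 or a >= r with r > 1) are irrelevant.
  Here (r_L,a_L) = (r-a, <r>_(r-a)) and (r_R,a_R) = (a, <-r>_a).\<close>
function danilov :: "nat \<Rightarrow> nat \<Rightarrow> pt3 set set" where
  "danilov r a =
     (if r \<le> 1 \<or> a = 0 \<or> r \<le> a then faces Delta
      else faces (cone_span {e2, e3, pnt r a (r - a)})
           \<union> (`) (Lmap r a) ` danilov (r - a) (r mod (r - a))
           \<union> (`) (Rmap r a) ` danilov a ((a - r mod a) mod a))"
  by pat_completeness auto
termination
  by (relation "Wellfounded.measure fst") auto

end

theory Submission
  imports Defs
begin


lemma cone_span_0: "0 \<in> cone_span S"
  unfolding cone_span_def by (rule CollectI, rule exI[of _ "{}"]) auto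

lemma cone_span_base: "v \<in> S \<Longrightarrow> v \<in> cone_span S"
  unfolding cone_span_def
  by (rule CollectI, rule exI[of _ "{v}"], rule exI[of _ "\<lambda>_. 1"]) auto

lemma cone_span_scale: "x \<in> cone_span S \<Longrightarrow> t \<ge> 0 \<Longrightarrow> t *\<^sub>R x \<in> cone_span S"
proof -
  assume "x \<in> cone_span S" "t \<ge> 0"
  then obtain V c where V: "finite V" "V \<subseteq> S" "\<forall>v\<in>V. c v \<ge> 0" "x = (\<Sum>v\<in>V. c v *\<^sub>R v)"
    unfolding cone_span_def by blast
  have "t *\<^sub>R x = (\<Sum>v\<in>V. (t * c v) *\<^sub>R v)"
    using V(4) by (simp add: scaleR_sum_right)
  then show ?thesis unfolding cone_span_def using V \<open>t \<ge> 0\<close>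
    by (intro CollectI exI[of _ V] exI[of _ "\<lambda>v. t * c v"]) auto
qed

lemma cone_span_add: "x \<in> cone_span S \<Longrightarrow> y \<in> cone_span S \<Longrightarrow> x + y \<in> cone_span S"
proof -
  assume "x \<in> cone_span S" "y \<in> cone_span S"
  then obtain V c W d where V: "finite V" "V \<subseteq> S" "\<forall>v\<in>V. c v \<ge> 0" "x = (\<Sum>v\<in>V. c v *\<^sub>R v)"
    and W: "finite W" "W \<subseteq> S" "\<forall>v\<in>W. d v \<ge> 0" "y = (\<Sum>v\<in>W. d v *\<^sub>R v)"
    unfolding cone_span_def by blast
  define e where "e v = (if v \<in> V then c v else 0) + (if v \<in> W then d v else 0)" for v
  have s1: "(\<Sum>v\<in>V\<union>W. (if v \<in> V then c v else 0) *\<^sub>R v) = x"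
  proof -
    have "(\<Sum>v\<in>V\<union>W. (if v \<in> V then c v else 0) *\<^sub>R v) = (\<Sum>v\<in>V\<union>W. if v \<in> V then c v *\<^sub>R v else 0)"
      by (rule sum.cong) auto
    also have "\<dots> = (\<Sum>v\<in>(V\<union>W) \<inter> V. c v *\<^sub>R v)"
      using V(1) W(1) sum.inter_restrict[of "V\<union>W" "\<lambda>v. c v *\<^sub>R v" V] by simp
    also have "(V\<union>W) \<inter> V = V" by blast
    finally show ?thesis using V(4) by simp
  qed
  have s2: "(\<Sum>v\<in>V\<union>W. (if v \<in> W then d v else 0) *\<^sub>R v) = y"
  proof -
    have "(\<Sum>v\<in>V\<union>W. (if v \<in> W then d v else 0) *\<^sub>R v) = (\<Sum>v\<in>V\<union>W. if v \<in> W then d v *\<^sub>R v else 0)"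
      by (rule sum.cong) auto
    also have "\<dots> = (\<Sum>v\<in>(V\<union>W) \<inter> W. d v *\<^sub>R v)"
      using V(1) W(1) sum.inter_restrict[of "V\<union>W" "\<lambda>v. d v *\<^sub>R v" W] by simp
    also have "(V\<union>W) \<inter> W = W" by blast
    finally show ?thesis using W(4) by simp
  qed
  have "x + y = (\<Sum>v\<in>V\<union>W. e v *\<^sub>R v)"
    unfolding e_def scaleR_add_left sum.distrib s1 s2 ..
  moreover have "\<forall>v\<in>V\<union>W. e v \<ge> 0" using V(3) W(3) unfolding e_def by auto
  ultimately show ?thesis unfolding cone_span_def using V W
    by (intro CollectI exI[of _ "V \<union> W"] exI[of _ e]) auto
qed

lemma cone_span_least:
  assumes "S \<subseteq> C" "0 \<in> C" "\<And>x y. x \<in> C \<Longrightarrow> y \<in> C \<Longrightarrow> x + y \<in> C"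
    "\<And>x t. x \<in> C \<Longrightarrow> t \<ge> 0 \<Longrightarrow> t *\<^sub>R x \<in> C"
  shows "cone_span S \<subseteq> C"
proof
  fix x assume "x \<in> cone_span S"
  then obtain V c where V: "finite V" "V \<subseteq> S" "\<forall>v\<in>V. c v \<ge> 0" "x = (\<Sum>v\<in>V. c v *\<^sub>R v)"
    unfolding cone_span_def by blast
  have "V \<subseteq> S \<longrightarrow> (\<forall>v\<in>V. c v \<ge> 0) \<longrightarrow> (\<Sum>v\<in>V. c v *\<^sub>R v) \<in> C"
    using V(1)
  proof (induction V rule: finite_induct)
    case empty then show ?case using assms(2) by simp
  next
    case (insert v F)
    show ?case
    proof (intro impI)
      assume h: "insert v F \<subseteq> S" "\<forall>w\<in>insert v F. 0 \<le> c w"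
      have "c v *\<^sub>R v \<in> C" using h by (intro assms(4)) (use assms(1) in auto)
      moreover have "(\<Sum>w\<in>F. c w *\<^sub>R w) \<in> C" using insert.IH h by auto
      ultimately show "(\<Sum>w\<in>insert v F. c w *\<^sub>R w) \<in> C"
        using insert.hyps assms(3) by simp
    qed
  qed
  then show "x \<in> C" using V by auto
qed

lemma cone_span_mono: "S \<subseteq> T \<Longrightarrow> cone_span S \<subseteq> cone_span T"
  by (rule cone_span_least) (auto intro: cone_span_base cone_span_0 cone_span_add cone_span_scale)

lemma cone_span_insert_cone: "cone_span (insert p (cone_span T)) = cone_span (insert p T)"
proof
  show "cone_span (insert p (cone_span T)) \<subseteq> cone_span (insert p T)"
    apply (rule cone_span_least)
    using cone_span_mono[of T "insert p T"]
    by (auto intro: cone_span_base cone_span_0 cone_span_add cone_span_scale)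
  show "cone_span (insert p T) \<subseteq> cone_span (insert p (cone_span T))"
    by (rule cone_span_mono) (auto intro: cone_span_base)
qed

lemma cone_span_halfspace:
  assumes "\<forall>v\<in>S. inner a v \<ge> (0::real)" "x \<in> cone_span S"
  shows "inner a x \<ge> 0"
proof -
  have "cone_span S \<subseteq> {x. inner a x \<ge> 0}"
    by (rule cone_span_least) (use assms(1) in \<open>auto simp: inner_add_right\<close>)
  then show ?thesis using assms(2) by auto
qed

lemma cone_span_linear_image:
  assumes "linear f"
  shows "f ` cone_span S = cone_span (f ` S)"
proof
  show "f ` cone_span S \<subseteq> cone_span (f ` S)"
  proof
    fix y assume "y \<in> f ` cone_span S"
    then obtain V c where V: "finite V" "V \<subseteq> S" "\<forall>v\<in>V. c v \<ge> 0" "y = f (\<Sum>v\<in>V. c v *\<^sub>R v)"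
      unfolding cone_span_def by blast
    have "y = (\<Sum>v\<in>V. c v *\<^sub>R f v)"
      using V(4) assms by (simp add: linear_sum linear_scale)
    also have "\<dots> \<in> cone_span (f ` S)"
      using V(1,2,3)
    proof (induction V rule: finite_induct)
      case empty then show ?case by (simp add: cone_span_0)
    next
      case (insert v F)
      have "c v *\<^sub>R f v \<in> cone_span (f ` S)"
        using insert by (intro cone_span_scale cone_span_base) auto
      then show ?case using insert by (simp add: cone_span_add)
    qed
    finally show "y \<in> cone_span (f ` S)" .
  qed
  show "cone_span (f ` S) \<subseteq> f ` cone_span S"
  proof (rule cone_span_least)
    show "f ` S \<subseteq> f ` cone_span S" by (auto intro: cone_span_base)
    show "0 \<in> f ` cone_span S" using cone_span_0 assms linear_0 by (metis image_eqI)
    show "x + y \<in> f ` cone_span S" if hxy: "x \<in> f ` cone_span S" "y \<in> f ` cone_span S" for x y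
    proof -
      obtain a b where ab: "a \<in> cone_span S" "b \<in> cone_span S" "x = f a" "y = f b" using hxy by blast
      then have "x + y = f (a + b)" using assms by (simp add: linear_add)
      then show ?thesis using ab cone_span_add by blast
    qed
    show "t *\<^sub>R x \<in> f ` cone_span S" if hxt: "x \<in> f ` cone_span S" "t \<ge> 0" for x t
    proof -
      obtain a where ab: "a \<in> cone_span S" "x = f a" using hxt by blast
      then have "t *\<^sub>R x = f (t *\<^sub>R a)" using assms by (simp add: linear_scale)
      then show ?thesis using ab cone_span_scale hxt(2) by blast
    qed
  qed
qed



definition EE :: "pt3 set" where "EE = {e1, e2, e3}"
definition ZZ :: "pt3 set \<Rightarrow> pt3 set" where
  "ZZ T = {x. (\<forall>e\<in>EE. inner e x \<ge> 0) \<and> (\<forall>e\<in>EE - T. inner e x = 0)}"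

lemma e_distinct: "e1 \<noteq> e2" "e1 \<noteq> e3" "e2 \<noteq> e3"
  by (auto simp: e1_def e2_def e3_def)

lemma finite_EE: "finite EE" by (simp add: EE_def)

lemma inner_e: "inner e1 x = fst x" "inner e2 x = fst (snd x)" "inner e3 x = snd (snd x)"
  by (cases x; auto simp: e1_def e2_def e3_def)+

lemma decomp: "(\<Sum>e\<in>EE. inner e x *\<^sub>R e) = x"
proof -
  have "(\<Sum>e\<in>EE. inner e x *\<^sub>R e) = inner e1 x *\<^sub>R e1 + inner e2 x *\<^sub>R e2 + inner e3 x *\<^sub>R e3"
    unfolding EE_def using e_distinct by (simp add: add.assoc)
  also have "\<dots> = x" by (cases x) (simp add: inner_e, simp add: e1_def e2_def e3_def)
  finally show ?thesis .
qed

declare inner_Pair[simp del]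

lemma inner_EE: "e \<in> EE \<Longrightarrow> f \<in> EE \<Longrightarrow> inner e f = (if e = f then 1 else 0)"
  unfolding EE_def by (elim insertE; simp add: e1_def e2_def e3_def inner_Pair)

lemma cone_span_ZZ:
  assumes "T \<subseteq> EE" shows "cone_span T = ZZ T"
proof
  show "cone_span T \<subseteq> ZZ T"
  proof (rule cone_span_least)
    show "T \<subseteq> ZZ T" using assms by (auto simp: ZZ_def inner_EE simp del: inner_Pair)
  qed (auto simp: ZZ_def inner_add_right simp del: inner_Pair)
  show "ZZ T \<subseteq> cone_span T"
  proof
    fix x assume x: "x \<in> ZZ T"
    have "x = (\<Sum>e\<in>EE. inner e x *\<^sub>R e)" by (simp add: decomp)
    also have "\<dots> = (\<Sum>e\<in>T. inner e x *\<^sub>R e)"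
      using x assms finite_EE by (intro sum.mono_neutral_right) (auto simp: ZZ_def)
    finally have "x = (\<Sum>e\<in>T. inner e x *\<^sub>R e)" .
    moreover have "finite T" using assms finite_EE finite_subset by blast
    ultimately show "x \<in> cone_span T" unfolding cone_span_def using x assms
      by (intro CollectI exI[of _ T] exI[of _ "\<lambda>e. inner e x"]) (auto simp: ZZ_def)
  qed
qed

lemma Delta_ZZ: "Delta = ZZ EE"
  unfolding Delta_def EE_def[symmetric] by (rule cone_span_ZZ) simp

lemma convex_Delta: "convex Delta"
  unfolding Delta_ZZ ZZ_def convex_def by (auto simp: inner_add_right)

lemma ZZ_face: assumes "T \<subseteq> EE" shows "ZZ T face_of Delta"
proof -
  define a where "a = - (\<Sum>e\<in>EE - T. e)"
  have ax: "inner a x = - (\<Sum>e\<in>EE - T. inner e x)" for x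
    by (simp add: a_def inner_sum_left)
  have "Delta \<inter> {x. inner a x = 0} face_of Delta"
    apply (rule face_of_Int_supporting_hyperplane_le[OF convex_Delta])
    unfolding ax Delta_ZZ ZZ_def by (auto intro!: sum_nonneg)
  moreover have "Delta \<inter> {x. inner a x = 0} = ZZ T"
  proof -
    have eq: "(\<Sum>e\<in>EE - T. inner e x) = 0 \<longleftrightarrow> (\<forall>e\<in>EE - T. inner e x = 0)"
      if "\<forall>e\<in>EE. inner e x \<ge> 0" for x
      using that finite_EE by (intro sum_nonneg_eq_0_iff) auto
    show ?thesis unfolding ax Delta_ZZ ZZ_def using eq by auto
  qed
  ultimately show ?thesis by simp
qed

lemma face_cone:
  assumes F: "F face_of Delta" "F \<noteq> {}"
  shows "0 \<in> F" "\<And>x t. x \<in> F \<Longrightarrow> t \<ge> 0 \<Longrightarrow> t *\<^sub>R x \<in> F"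
    "\<And>x y. x \<in> F \<Longrightarrow> y \<in> F \<Longrightarrow> x + y \<in> F"
proof -
  have sub: "F \<subseteq> Delta" using F face_of_imp_subset by blast
  have cD: "t *\<^sub>R x \<in> Delta" if "x \<in> Delta" "t \<ge> 0" for x t
    using that unfolding Delta_def by (rule cone_span_scale)
  have D0: "0 \<in> Delta" unfolding Delta_def by (rule cone_span_0)
  have cvx: "convex F" using F(1) by (rule face_of_imp_convex)
  show z: "0 \<in> F"
  proof -
    obtain x where x: "x \<in> F" using F by blast
    show ?thesis
    proof (cases "x = 0")
      case True then show ?thesis using x by simp
    next
      case False
      have hm: "midpoint 0 (2 *\<^sub>R x) = x" by (simp add: midpoint_def)
      have "0 \<noteq> 2 *\<^sub>R x" using False by simp
      then have "x \<in> open_segment 0 (2 *\<^sub>R x)" using midpoint_in_open_segment[of 0 "2 *\<^sub>R x"] hm by simp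
      moreover have "2 *\<^sub>R x \<in> Delta" using x sub by (intro cD) auto
      ultimately show ?thesis using face_ofD[OF F(1) _ D0 _ x] by blast
    qed
  qed
  show sc: "t *\<^sub>R x \<in> F" if xt: "x \<in> F" "t \<ge> 0" for x t
  proof (cases "t \<le> 1")
    case True
    have "(1 - t) *\<^sub>R 0 + t *\<^sub>R x \<in> F"
      using convexD[OF cvx z xt(1), of "1 - t" t] True xt(2) by simp
    then show ?thesis by simp
  next
    case False
    show ?thesis
    proof (cases "x = 0")
      case True then show ?thesis using xt by simp
    next
      case x0: False
      have "x \<in> open_segment 0 (t *\<^sub>R x)"
        unfolding in_segment using False x0
        by (intro conjI exI[of _ "1/t"]) auto
      moreover have "t *\<^sub>R x \<in> Delta" using xt sub by (intro cD) auto
      ultimately show ?thesis using face_ofD[OF F(1) _ D0 _ xt(1)] by blast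
    qed
  qed
  show "x + y \<in> F" if xy: "x \<in> F" "y \<in> F" for x y
  proof -
    have "(1/2) *\<^sub>R x + (1/2) *\<^sub>R y \<in> F"
      using convexD[OF cvx xy, of "1/2" "1/2"] by simp
    from sc[OF this, of 2] show ?thesis by (simp add: scaleR_add_right)
  qed
qed

lemma face_is_ZZ:
  assumes F: "F face_of Delta" "F \<noteq> {}"
  shows "\<exists>T\<subseteq>EE. F = cone_span T"
proof -
  define T where "T = {e\<in>EE. \<exists>x\<in>F. inner e x > 0}"
  have sub: "F \<subseteq> Delta" using F face_of_imp_subset by blast
  have TE: "T \<subseteq> EE" by (auto simp: T_def)
  have "F \<subseteq> ZZ T"
  proof
    fix x assume xF: "x \<in> F"
    then have xZ: "x \<in> ZZ EE" using sub Delta_ZZ by auto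
    have "\<forall>e\<in>EE - T. inner e x = 0"
    proof
      fix e assume e: "e \<in> EE - T"
      then have "\<not> inner e x > 0" using xF unfolding T_def by blast
      moreover have "inner e x \<ge> 0" using xZ e unfolding ZZ_def by blast
      ultimately show "inner e x = 0" by linarith
    qed
    then show "x \<in> ZZ T" using xZ unfolding ZZ_def by blast
  qed
  moreover have "cone_span T \<subseteq> F"
  proof (rule cone_span_least)
    show "T \<subseteq> F"
    proof
      fix e assume e: "e \<in> T"
      then obtain x where x: "x \<in> F" "inner e x > 0" "e \<in> EE" by (auto simp: T_def)
      define a where "a = (2 * inner e x) *\<^sub>R e"
      define b where "b = 2 *\<^sub>R (x - inner e x *\<^sub>R e)"
      have xD: "x \<in> ZZ EE" using x sub Delta_ZZ by auto
      have eD: "e \<in> Delta" unfolding Delta_def EE_def[symmetric] using x(3) by (rule cone_span_base)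
      have aD: "a \<in> Delta" unfolding a_def Delta_def
        using x(2) eD unfolding Delta_def by (intro cone_span_scale) auto
      have bD: "b \<in> ZZ EE" unfolding ZZ_def
      proof (intro CollectI conjI ballI)
        fix f assume f: "f \<in> EE"
        have "inner f b = 2 * (inner f x - inner e x * (if f = e then 1 else 0))"
          using f x(3) by (simp add: b_def inner_diff_right inner_EE)
        moreover have "inner f x \<ge> 0" using xD f unfolding ZZ_def by blast
        ultimately show "inner f b \<ge> 0" by (simp add: inner_commute)
      next
        fix f assume "f \<in> EE - EE" then show "inner f b = 0" by blast
      qed
      have "inner e a \<noteq> inner e b" using x by (simp add: a_def b_def inner_EE inner_diff_right)
      then have ab: "a \<noteq> b" by auto
      have "midpoint a b = x" by (simp add: midpoint_def a_def b_def algebra_simps)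
      then have xs: "x \<in> open_segment a b" using ab midpoint_in_open_segment[of a b] by simp
      have "a \<in> F" using face_ofD[OF F(1) xs aD _ x(1)] bD Delta_ZZ by blast
      from face_cone(2)[OF F this, of "1 / (2 * inner e x)"] x
      show "e \<in> F" by (simp add: a_def)
    qed
  qed (use face_cone[OF F] in auto)
  ultimately show ?thesis using cone_span_ZZ[OF TE] TE by blast
qed

definition simp_fan :: "pt3 set \<Rightarrow> pt3 set set" where
  "simp_fan S = {cone_span T | T. T \<subseteq> S}"

lemma faces_Delta: "faces Delta = simp_fan EE"
proof
  show "faces Delta \<subseteq> simp_fan EE"
    using face_is_ZZ by (auto simp: faces_def simp_fan_def)
  show "simp_fan EE \<subseteq> faces Delta"
  proof
    fix F assume "F \<in> simp_fan EE"
    then obtain T where T: "T \<subseteq> EE" "F = cone_span T" by (auto simp: simp_fan_def)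
    then show "F \<in> faces Delta" using ZZ_face[OF T(1)] cone_span_ZZ[OF T(1)] cone_span_0
      by (auto simp: faces_def)
  qed
qed



definition lin3 :: "pt3 \<Rightarrow> pt3 \<Rightarrow> pt3 \<Rightarrow> pt3 \<Rightarrow> pt3" where
  "lin3 u v w x = fst x *\<^sub>R u + fst (snd x) *\<^sub>R v + snd (snd x) *\<^sub>R w"

lemma linear_lin3: "linear (lin3 u v w)"
  by (rule linearI) (simp_all add: lin3_def algebra_simps)

lemma lin3_EE: "lin3 u v w ` EE = {u, v, w}"
  by (simp add: EE_def lin3_def e1_def e2_def e3_def)

lemma Lmap_lin3: "Lmap r a = lin3 e1 e2 (pnt r a (r - a))"
  by (rule ext) (simp add: Lmap_def lin3_def split: prod.split)

lemma Rmap_lin3: "Rmap r a = lin3 e1 (pnt r a (r - a)) e3"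
  by (rule ext) (simp add: Rmap_def lin3_def split: prod.split)

lemma simp_fan_image:
  assumes "linear f" shows "(`) f ` simp_fan S = simp_fan (f ` S)"
proof
  show "(`) f ` simp_fan S \<subseteq> simp_fan (f ` S)"
  proof
    fix X assume "X \<in> (`) f ` simp_fan S"
    then obtain T where T: "T \<subseteq> S" "X = f ` cone_span T" by (auto simp: simp_fan_def)
    then have "X = cone_span (f ` T)" "f ` T \<subseteq> f ` S" using cone_span_linear_image[OF assms] by auto
    then show "X \<in> simp_fan (f ` S)" unfolding simp_fan_def by blast
  qed
  show "simp_fan (f ` S) \<subseteq> (`) f ` simp_fan S"
  proof
    fix X assume "X \<in> simp_fan (f ` S)"
    then obtain U where U: "U \<subseteq> f ` S" "X = cone_span U" by (auto simp: simp_fan_def)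
    then obtain T where T: "T \<subseteq> S" "U = f ` T" by (auto simp: subset_image_iff)
    then have "X = f ` cone_span T" using U cone_span_linear_image[OF assms] by simp
    then show "X \<in> (`) f ` simp_fan S" using T by (auto simp: simp_fan_def)
  qed
qed

lemma faces_image:
  assumes "linear f" "inj f" shows "faces (f ` X) = (`) f ` faces X"
proof
  show "faces (f ` X) \<subseteq> (`) f ` faces X"
  proof
    fix t assume t: "t \<in> faces (f ` X)"
    then have "t \<subseteq> f ` X" by (auto simp: faces_def dest: face_of_imp_subset)
    then have te: "t = f ` (f -` t)" by auto
    have "t face_of f ` X" "t \<noteq> {}" using t by (auto simp: faces_def)
    then have "f -` t face_of X" using face_of_linear_image[OF assms, of "f -` t" X] te
      by auto
    moreover have "f -` t \<noteq> {}" using \<open>t \<noteq> {}\<close> te by (metis image_empty)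
    ultimately have "f -` t \<in> faces X" by (auto simp: faces_def)
    then show "t \<in> (`) f ` faces X" using te by blast
  qed
  show "(`) f ` faces X \<subseteq> faces (f ` X)"
    using face_of_linear_image[OF assms] by (auto simp: faces_def)
qed

lemma faces_simplex:
  assumes "linear f" "inj f" shows "faces (cone_span (f ` EE)) = simp_fan (f ` EE)"
proof -
  have "cone_span (f ` EE) = f ` Delta"
    unfolding Delta_def EE_def[symmetric] using cone_span_linear_image[OF assms(1)] by simp
  then show ?thesis using faces_image[OF assms] faces_Delta simp_fan_image[OF assms(1)] by simp
qed

lemma star_sub_Un: "star_sub (A \<union> B) p = star_sub A p \<union> star_sub B p"
  unfolding star_sub_def by blast

lemma star_sub_notin: "\<forall>\<sigma>\<in>A. p \<notin> \<sigma> \<Longrightarrow> star_sub A p = A"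
  unfolding star_sub_def by blast

lemma star_sub_image:
  assumes "linear M" "inj M"
  shows "star_sub ((`) M ` G) (M p) = (`) M ` star_sub G p"
proof -
  have mem: "M p \<in> M ` s \<longleftrightarrow> p \<in> s" for s using assms(2) by (simp add: inj_image_mem_iff)
  have cs: "cone_span (insert (M p) (M ` t)) = M ` cone_span (insert p t)" for t
    using cone_span_linear_image[OF assms(1)] by simp
  have fi: "faces (M ` s) = (`) M ` faces s" for s by (rule faces_image[OF assms])
  have A: "{\<sigma> \<in> (`) M ` G. M p \<notin> \<sigma>} = (`) M ` {\<sigma> \<in> G. p \<notin> \<sigma>}"
    using mem by auto
  have B: "{cone_span (insert (M p) \<tau>) |\<sigma> \<tau>. \<sigma> \<in> (`) M ` G \<and> M p \<in> \<sigma> \<and> \<tau> \<in> faces \<sigma> \<and> M p \<notin> \<tau>}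
      = (`) M ` {cone_span (insert p \<tau>) |\<sigma> \<tau>. \<sigma> \<in> G \<and> p \<in> \<sigma> \<and> \<tau> \<in> faces \<sigma> \<and> p \<notin> \<tau>}"
  proof (intro subset_antisym subsetI)
    fix x assume "x \<in> {cone_span (insert (M p) \<tau>) |\<sigma> \<tau>. \<sigma> \<in> (`) M ` G \<and> M p \<in> \<sigma> \<and> \<tau> \<in> faces \<sigma> \<and> M p \<notin> \<tau>}"
    then obtain \<sigma> \<tau> where h: "x = cone_span (insert (M p) \<tau>)" "\<sigma> \<in> (`) M ` G" "M p \<in> \<sigma>" "\<tau> \<in> faces \<sigma>" "M p \<notin> \<tau>"
      by blast
    then obtain \<sigma>0 where s0: "\<sigma>0 \<in> G" "\<sigma> = M ` \<sigma>0" by blast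
    then obtain \<tau>0 where t0: "\<tau>0 \<in> faces \<sigma>0" "\<tau> = M ` \<tau>0" using h(4) fi by blast
    have "p \<in> \<sigma>0" "p \<notin> \<tau>0" using h(3,5) s0 t0 mem by auto
    moreover have "x = M ` cone_span (insert p \<tau>0)" using h(1) t0 cs by simp
    ultimately show "x \<in> (`) M ` {cone_span (insert p \<tau>) |\<sigma> \<tau>. \<sigma> \<in> G \<and> p \<in> \<sigma> \<and> \<tau> \<in> faces \<sigma> \<and> p \<notin> \<tau>}"
      using s0 t0 by blast
  next
    fix x assume "x \<in> (`) M ` {cone_span (insert p \<tau>) |\<sigma> \<tau>. \<sigma> \<in> G \<and> p \<in> \<sigma> \<and> \<tau> \<in> faces \<sigma> \<and> p \<notin> \<tau>}"
    then obtain \<sigma> \<tau> where h: "x = M ` cone_span (insert p \<tau>)" "\<sigma> \<in> G" "p \<in> \<sigma>" "\<tau> \<in> faces \<sigma>" "p \<notin> \<tau>"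
      by blast
    have "M ` \<tau> \<in> faces (M ` \<sigma>)" using h(4) fi by blast
    moreover have "M p \<in> M ` \<sigma>" "M p \<notin> M ` \<tau>" using h(3,5) mem by auto
    moreover have "x = cone_span (insert (M p) (M ` \<tau>))" using h(1) cs by simp
    ultimately show "x \<in> {cone_span (insert (M p) \<tau>) |\<sigma> \<tau>. \<sigma> \<in> (`) M ` G \<and> M p \<in> \<sigma> \<and> \<tau> \<in> faces \<sigma> \<and> M p \<notin> \<tau>}"
      using h(2) by blast
  qed
  show ?thesis unfolding star_sub_def image_Un A B ..
qed



lemma fold_lift:
  assumes "linear M" "inj M" "\<forall>p\<in>set ps. \<forall>\<sigma>\<in>A. M p \<notin> \<sigma>"
  shows "foldl star_sub (A \<union> (`) M ` G) (map M ps) = A \<union> (`) M ` foldl star_sub G ps"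
  using assms(3)
proof (induction ps arbitrary: G)
  case Nil then show ?case by simp
next
  case (Cons p ps)
  have "star_sub (A \<union> (`) M ` G) (M p) = A \<union> (`) M ` star_sub G p"
    using Cons.prems star_sub_Un star_sub_notin star_sub_image[OF assms(1,2)] by simp
  then show ?case using Cons by simp
qed

lemma simp_fan_Pow: "simp_fan S = cone_span ` Pow S"
  by (auto simp: simp_fan_def)

lemma q_in_span:
  assumes "T \<subseteq> EE" "\<forall>e\<in>EE. inner e q > 0"
  shows "q \<in> cone_span T \<longleftrightarrow> T = EE"
proof -
  have "q \<in> ZZ T \<longleftrightarrow> EE - T = {}"
  proof
    assume "q \<in> ZZ T"
    then have "\<forall>e\<in>EE - T. inner e q = 0" unfolding ZZ_def by blast
    show "EE - T = {}"
    proof (rule ccontr)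
      assume "EE - T \<noteq> {}"
      then obtain e where e: "e \<in> EE - T" by blast
      then have "inner e q = 0" "inner e q > 0" using \<open>\<forall>e\<in>EE - T. inner e q = 0\<close> assms(2) by blast+
      then show False by simp
    qed
  next
    assume "EE - T = {}"
    then have "\<forall>e\<in>EE - T. inner e q = 0" by blast
    moreover have "\<forall>e\<in>EE. inner e q \<ge> 0" using assms(2) less_imp_le by blast
    ultimately show "q \<in> ZZ T" unfolding ZZ_def by blast
  qed
  then show ?thesis using cone_span_ZZ[OF assms(1)] assms(1) by auto
qed

lemma aux_sup:
  assumes "B \<subseteq> EE" "B \<noteq> EE" "U \<subseteq> insert q B"
  shows "U \<in> {T. T \<subseteq> EE \<and> T \<noteq> EE} \<union> insert q ` {T. T \<subseteq> EE \<and> T \<noteq> EE}"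
proof (cases "q \<in> U")
  case True
  have "U - {q} \<subseteq> B" using assms(3) by blast
  then have "U - {q} \<in> {T. T \<subseteq> EE \<and> T \<noteq> EE}" using assms(1,2) by blast
  moreover have "U = insert q (U - {q})" using True by blast
  ultimately show ?thesis by blast
next
  case False
  then have "U \<subseteq> B" using assms(3) by blast
  then show ?thesis using assms(1,2) by blast
qed

lemma aux_sub:
  assumes "T \<subseteq> EE" "T \<noteq> EE"
  shows "T \<subseteq> {e2, e3} \<or> T \<subseteq> {e1, e3} \<or> T \<subseteq> {e1, e2}"
proof -
  obtain e where e: "e \<in> EE" "e \<notin> T" using assms by blast
  then have "e = e1 \<or> e = e2 \<or> e = e3" unfolding EE_def by blast
  then show ?thesis using e(2) assms(1) unfolding EE_def by blast
qed

lemma set_ident: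
  assumes "q \<notin> EE"
  shows "{T. T \<subseteq> EE \<and> T \<noteq> EE} \<union> insert q ` {T. T \<subseteq> EE \<and> T \<noteq> EE}
    = Pow {e2, e3, q} \<union> Pow {e1, q, e3} \<union> Pow {e1, e2, q}"
proof (intro subset_antisym subsetI)
  fix U assume "U \<in> {T. T \<subseteq> EE \<and> T \<noteq> EE} \<union> insert q ` {T. T \<subseteq> EE \<and> T \<noteq> EE}"
  then obtain T where T: "T \<subseteq> EE" "T \<noteq> EE" "U = T \<or> U = insert q T" by blast
  have "U \<subseteq> insert q T" using T(3) by blast
  moreover have "insert q T \<subseteq> {e2, e3, q} \<or> insert q T \<subseteq> {e1, q, e3} \<or> insert q T \<subseteq> {e1, e2, q}"
    using aux_sub[OF T(1,2)] by (elim disjE) blast+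
  ultimately have "U \<subseteq> {e2, e3, q} \<or> U \<subseteq> {e1, q, e3} \<or> U \<subseteq> {e1, e2, q}" by blast
  then show "U \<in> Pow {e2, e3, q} \<union> Pow {e1, q, e3} \<union> Pow {e1, e2, q}" by blast
next
  fix U assume U: "U \<in> Pow {e2, e3, q} \<union> Pow {e1, q, e3} \<union> Pow {e1, e2, q}"
  have n1: "{e2, e3} \<noteq> EE" "{e1, e3} \<noteq> EE" "{e1, e2} \<noteq> EE"
  proof -
    have "e1 \<in> EE" "e2 \<in> EE" "e3 \<in> EE" unfolding EE_def by blast+
    moreover have "e1 \<notin> {e2, e3}" "e2 \<notin> {e1, e3}" "e3 \<notin> {e1, e2}" by (simp_all add: e1_def e2_def e3_def)
    ultimately show "{e2, e3} \<noteq> EE" "{e1, e3} \<noteq> EE" "{e1, e2} \<noteq> EE" by blast+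
  qed
  have s1: "{e2, e3} \<subseteq> EE" "{e1, e3} \<subseteq> EE" "{e1, e2} \<subseteq> EE" unfolding EE_def by blast+
  have i: "{e2, e3, q} = insert q {e2, e3}" "{e1, q, e3} = insert q {e1, e3}" "{e1, e2, q} = insert q {e1, e2}"
    by (simp_all add: insert_commute)
  have "U \<subseteq> insert q {e2, e3} \<or> U \<subseteq> insert q {e1, e3} \<or> U \<subseteq> insert q {e1, e2}"
    using U unfolding i by blast
  then show "U \<in> {T. T \<subseteq> EE \<and> T \<noteq> EE} \<union> insert q ` {T. T \<subseteq> EE \<and> T \<noteq> EE}"
    by (elim disjE) (rule aux_sup[OF s1(1) n1(1)], assumption, rule aux_sup[OF s1(2) n1(2)], assumption,
       rule aux_sup[OF s1(3) n1(3)], assumption)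
qed



lemma star_Delta:
  assumes qpos: "\<forall>e\<in>EE. inner e q > 0"
  shows "star_sub (faces Delta) q = simp_fan {e2, e3, q} \<union> simp_fan {e1, q, e3} \<union> simp_fan {e1, e2, q}"
proof -
  let ?P = "{T. T \<subseteq> EE \<and> T \<noteq> EE}"
  have qE: "q \<notin> EE"
  proof
    assume "q \<in> EE"
    then have "q = e1 \<or> q = e2 \<or> q = e3" unfolding EE_def by blast
    moreover have "e1 \<in> EE" "e2 \<in> EE" unfolding EE_def by blast+
    ultimately show False using qpos by (auto simp: e1_def e2_def e3_def inner_Pair)
  qed
  have qs: "T \<subseteq> EE \<Longrightarrow> q \<in> cone_span T \<longleftrightarrow> T = EE" for T using q_in_span qpos by blast
  have DE: "cone_span EE = Delta" by (simp add: Delta_def EE_def)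
  have fD: "faces Delta = cone_span ` Pow EE" using faces_Delta simp_fan_Pow by simp
  have 1: "{\<sigma> \<in> faces Delta. q \<notin> \<sigma>} = cone_span ` ?P"
  proof (intro subset_antisym subsetI)
    fix x assume "x \<in> {\<sigma> \<in> faces Delta. q \<notin> \<sigma>}"
    then obtain T where T: "T \<subseteq> EE" "x = cone_span T" "q \<notin> x" unfolding fD by blast
    then have "T \<noteq> EE" using qs[OF T(1)] by simp
    then show "x \<in> cone_span ` ?P" using T by blast
  next
    fix x assume "x \<in> cone_span ` ?P"
    then obtain T where T: "T \<subseteq> EE" "T \<noteq> EE" "x = cone_span T" by blast
    then have "q \<notin> x" using qs[OF T(1)] by simp
    then show "x \<in> {\<sigma> \<in> faces Delta. q \<notin> \<sigma>}" unfolding fD using T by blast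
  qed
  have 2: "{cone_span (insert q \<tau>) |\<sigma> \<tau>. \<sigma> \<in> faces Delta \<and> q \<in> \<sigma> \<and> \<tau> \<in> faces \<sigma> \<and> q \<notin> \<tau>}
     = (\<lambda>T. cone_span (insert q T)) ` ?P"
  proof (intro subset_antisym subsetI)
    fix x assume "x \<in> {cone_span (insert q \<tau>) |\<sigma> \<tau>. \<sigma> \<in> faces Delta \<and> q \<in> \<sigma> \<and> \<tau> \<in> faces \<sigma> \<and> q \<notin> \<tau>}"
    then obtain \<sigma> \<tau> where h: "x = cone_span (insert q \<tau>)" "\<sigma> \<in> faces Delta" "q \<in> \<sigma>" "\<tau> \<in> faces \<sigma>" "q \<notin> \<tau>"
      by blast
    have "\<sigma> \<in> cone_span ` Pow EE" using h(2) fD by simp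
    then obtain T where T: "T \<subseteq> EE" "\<sigma> = cone_span T" by blast
    then have "T = EE" using qs[OF T(1)] h(3) by simp
    then have "\<sigma> = Delta" using T DE by simp
    then have "\<tau> \<in> cone_span ` Pow EE" using h(4) fD by simp
    then obtain T' where T': "T' \<subseteq> EE" "\<tau> = cone_span T'" by blast
    then have "T' \<noteq> EE" using qs[OF T'(1)] h(5) by simp
    moreover have "x = cone_span (insert q T')" using h(1) T' cone_span_insert_cone by simp
    ultimately show "x \<in> (\<lambda>T. cone_span (insert q T)) ` ?P" using T'(1) by (intro image_eqI[of _ _ T']) auto
  next
    fix x assume "x \<in> (\<lambda>T. cone_span (insert q T)) ` ?P"
    then obtain T where T: "T \<subseteq> EE" "T \<noteq> EE" "x = cone_span (insert q T)" by blast
    have "Delta \<in> faces Delta" using fD DE by blast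
    moreover have "q \<in> Delta" using DE qs[of EE] by simp
    moreover have "cone_span T \<in> faces Delta" using fD T by blast
    moreover have "q \<notin> cone_span T" using T qs[OF T(1)] by simp
    moreover have "x = cone_span (insert q (cone_span T))" using T cone_span_insert_cone by simp
    ultimately show "x \<in> {cone_span (insert q \<tau>) |\<sigma> \<tau>. \<sigma> \<in> faces Delta \<and> q \<in> \<sigma> \<and> \<tau> \<in> faces \<sigma> \<and> q \<notin> \<tau>}"
      by (intro CollectI exI[of _ Delta] exI[of _ "cone_span T"]) simp
  qed
  have "star_sub (faces Delta) q = cone_span ` (?P \<union> insert q ` ?P)"
    unfolding star_sub_def 1 2 by (simp add: image_Un image_image)
  also have "\<dots> = cone_span ` (Pow {e2, e3, q} \<union> Pow {e1, q, e3} \<union> Pow {e1, e2, q})"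
    using set_ident[OF qE] by simp
  finally show ?thesis by (simp add: simp_fan_Pow image_Un)
qed



lemma inv1: assumes "r > 1" shows "int (inv_mod r 1) mod int r = 1"
proof -
  have "(1 * inv_mod r 1) mod r = 1 mod r"
    unfolding inv_mod_def by (rule someI[of _ 1]) simp
  then have "inv_mod r 1 mod r = 1" using assms by simp
  then show ?thesis by (metis of_nat_1 of_nat_mod)
qed

lemma invm1: assumes "r > 1" shows "(- int (inv_mod r (r - 1))) mod int r = 1"
proof -
  have ex: "((r - 1) * (r - 1)) mod r = 1 mod r"
  proof -
    obtain k where k: "r = k + 2" using assms by (metis add.commute less_iff_Suc_add one_add_one plus_1_eq_Suc add_Suc_right)
    have "(r - 1) * (r - 1) = r * (r - 2) + 1" unfolding k by (simp add: algebra_simps)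
    then show ?thesis using assms by (simp add: mod_Suc)
  qed
  have "((r - 1) * inv_mod r (r - 1)) mod r = 1 mod r"
    unfolding inv_mod_def by (rule someI[of _ "r - 1"]) (rule ex)
  then have h: "(int (r - 1) * int (inv_mod r (r - 1))) mod int r = 1"
    using assms by (metis of_nat_1 of_nat_mod of_nat_mult mod_less)
  have "int (r - 1) = int r - 1" using assms by simp
  then have "(int (r - 1) * int (inv_mod r (r - 1))) mod int r = (- int (inv_mod r (r - 1))) mod int r"
    by (simp add: algebra_simps mod_diff_left_eq[symmetric])
  then show ?thesis using h by simp
qed

lemma pnt1:
  assumes "r > 1" "0 < i" "i < r"
  shows "pnt r 1 i = ((real r - real i) / real r, (real r - real i) / real r, real i / real r)"
proof -
  let ?b = "inv_mod r 1"
  have "(- (int i * int ?b)) mod int r = (- ((int i * (int ?b mod int r)) mod int r)) mod int r"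
    by (metis mod_minus_eq mod_mult_right_eq)
  also have "\<dots> = (- int i) mod int r" using inv1[OF assms(1)] by (simp add: mod_minus_eq)
  also have "\<dots> = int r - int i" using assms by (simp add: zmod_zminus1_eq_if)
  finally have m: "(- (int i * int ?b)) mod int r = int r - int i" .
  show ?thesis unfolding pnt_def Let_def m by simp
qed

lemma pntm1:
  assumes "r > 1" "0 < i" "i < r"
  shows "pnt r (r - 1) i = (real i / real r, (real r - real i) / real r, real i / real r)"
proof -
  let ?b = "inv_mod r (r - 1)"
  have "(- (int i * int ?b)) mod int r = (int i * ((- int ?b) mod int r)) mod int r"
    by (metis mod_mult_right_eq mult_minus_right)
  also have "\<dots> = int i" using invm1[OF assms(1)] assms by simp
  finally have m: "(- (int i * int ?b)) mod int r = int i" .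
  show ?thesis unfolding pnt_def Let_def m by simp
qed



lemma c1g: fixes R j :: real assumes "R > 1"
  shows "(R - 1 - j) / (R - 1) + j / (R - 1) * (1 / R) = (R - j) / R"
proof -
  obtain d where d: "R = d + 1" "d > 0" using assms by (metis add.commute diff_add_cancel diff_gt_0_iff_gt)
  show ?thesis unfolding d(1) using d(2) by (simp add: divide_simps) (simp add: algebra_simps)
qed

lemma c2g: fixes R j :: real assumes "R > 1"
  shows "j / (R - 1) + (R - 1 - j) / (R - 1) * (1 / R) = (j + 1) / R"
proof -
  obtain d where d: "R = d + 1" "d > 0" using assms by (metis add.commute diff_add_cancel diff_gt_0_iff_gt)
  show ?thesis unfolding d(1) using d(2) by (simp add: divide_simps) (simp add: algebra_simps)
qed

lemma c3g: fixes R j :: real assumes "R > 1"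
  shows "j / (R - 1) * ((R - 1) / R) = j / R"
  using assms by (simp add: divide_simps)

lemma L1:
  assumes "r \<ge> 3" "0 < j" "j \<le> r - 2"
  shows "Lmap r 1 (pnt (r - 1) 1 j) = pnt r 1 j"
proof -
  have q: "pnt r 1 (r - 1) = (1 / real r, 1 / real r, (real r - 1) / real r)"
    using pnt1[of r "r - 1"] assms by (simp add: of_nat_diff)
  have p: "pnt (r - 1) 1 j = ((real r - 1 - real j) / (real r - 1), (real r - 1 - real j) / (real r - 1), real j / (real r - 1))"
  proof -
    have rr: "real (r - 1) = real r - 1" using assms by (simp add: of_nat_diff)
    have "r - 1 > 1" "j < r - 1" using assms by auto
    from pnt1[OF this(1) assms(2) this(2)] show ?thesis unfolding rr .
  qed
  have t: "pnt r 1 j = ((real r - real j) / real r, (real r - real j) / real r, real j / real r)"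
    using pnt1[of r j] assms by simp
  have R: "real r > 1" using assms by simp
  have R1: "real r - 1 \<noteq> 0" using R by simp
  have c1: "(real r - 1 - real j) / (real r - 1) + real j / (real r - 1) * (1 / real r) = (real r - real j) / real r"
    using c1g[OF R] .
  have c3: "real j / (real r - 1) * ((real r - 1) / real r) = real j / real r"
    using c3g[OF R] .
  show ?thesis unfolding Lmap_lin3 q p t lin3_def e1_def e2_def e3_def
    using c1 c3 by simp
qed

lemma R1:
  assumes "r \<ge> 3" "0 < i" "i \<le> r - 2"
  shows "Rmap r (r - 1) (pnt (r - 1) (r - 2) i) = pnt r (r - 1) (Suc i)"
proof -
  have q: "pnt r (r - 1) (r - (r - 1)) = (1 / real r, (real r - 1) / real r, 1 / real r)"
    using pntm1[of r 1] assms by simp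
  have p: "pnt (r - 1) (r - 2) i = (real i / (real r - 1), (real r - 1 - real i) / (real r - 1), real i / (real r - 1))"
  proof -
    have rr: "real (r - 1) = real r - 1" using assms by (simp add: of_nat_diff)
    have e: "r - 1 - 1 = r - 2" by simp
    have "r - 1 > 1" "i < r - 1" using assms by auto
    from pntm1[OF this(1) assms(2) this(2)] show ?thesis unfolding rr e .
  qed
  have t: "pnt r (r - 1) (Suc i) = ((real i + 1) / real r, (real r - real i - 1) / real r, (real i + 1) / real r)"
    using pntm1[of r "Suc i"] assms by simp
  have R: "real r > 1" using assms by simp
  have R1: "real r - 1 \<noteq> 0" using R by simp
  have c1: "real i / (real r - 1) + (real r - 1 - real i) / (real r - 1) * (1 / real r) = (real i + 1) / real r"
    using c2g[OF R] .
  have c2: "(real r - 1 - real i) / (real r - 1) * ((real r - 1) / real r) = (real r - real i - 1) / real r"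
    using c3g[OF R, of "real r - 1 - real i"] by (simp add: algebra_simps)
  show ?thesis unfolding Rmap_lin3 q p t lin3_def e1_def e2_def e3_def
    using c1 c2 by simp
qed



lemma excl:
  assumes "\<forall>v\<in>S. inner a v \<ge> (0::real)" "inner a p < 0"
  shows "\<forall>\<sigma>\<in>simp_fan S. p \<notin> \<sigma>"
proof
  fix \<sigma> assume "\<sigma> \<in> simp_fan S"
  then obtain T where T: "T \<subseteq> S" "\<sigma> = cone_span T" by (auto simp: simp_fan_def)
  show "p \<notin> \<sigma>"
  proof
    assume "p \<in> \<sigma>"
    then have "inner a p \<ge> 0" using T assms(1) cone_span_halfspace[of T a p] by blast
    then show False using assms(2) by simp
  qed
qed

lemma dan_base: "danilov 1 a = faces Delta"
  by (subst danilov.simps) simp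

lemma dan_step:
  assumes "1 < r" "0 < a" "a < r"
  shows "danilov r a = faces (cone_span {e2, e3, pnt r a (r - a)})
           \<union> (`) (Lmap r a) ` danilov (r - a) (r mod (r - a))
           \<union> (`) (Rmap r a) ` danilov a ((a - r mod a) mod a)"
  by (subst danilov.simps) (use assms in \<open>simp del: danilov.simps\<close>)

lemma lin3_apply: "lin3 (u1,u2,u3) (v1,v2,v3) (w1,w2,w3) (a,b,c) =
   (a * u1 + b * v1 + c * w1, a * u2 + b * v2 + c * w2, a * u3 + b * v3 + c * w3)"
  by (simp add: lin3_def)

lemma inj_N: assumes "fst q \<noteq> 0" shows "inj (lin3 e2 e3 q)"
proof (rule injI)
  fix x y assume h: "lin3 e2 e3 q x = lin3 e2 e3 q y"
  obtain q1 q2 q3 where q: "q = (q1, q2, q3)" by (cases q) auto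
  obtain a b c where x: "x = (a, b, c)" by (cases x) auto
  obtain a' b' c' where y: "y = (a', b', c')" by (cases y) auto
  from h have "c * q1 = c' * q1" "a + c * q2 = a' + c' * q2" "b + c * q3 = b' + c' * q3"
    unfolding q x y e2_def e3_def lin3_apply by simp_all
  moreover have "q1 \<noteq> 0" using assms q by simp
  ultimately show "x = y" unfolding x y by simp
qed

lemma inj_L: assumes "snd (snd q) \<noteq> 0" shows "inj (lin3 e1 e2 q)"
proof (rule injI)
  fix x y assume h: "lin3 e1 e2 q x = lin3 e1 e2 q y"
  obtain q1 q2 q3 where q: "q = (q1, q2, q3)" by (cases q) auto
  obtain a b c where x: "x = (a, b, c)" by (cases x) auto
  obtain a' b' c' where y: "y = (a', b', c')" by (cases y) auto
  from h have "a + c * q1 = a' + c' * q1" "b + c * q2 = b' + c' * q2" "c * q3 = c' * q3"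
    unfolding q x y e1_def e2_def lin3_apply by simp_all
  moreover have "q3 \<noteq> 0" using assms q by simp
  ultimately show "x = y" unfolding x y by simp
qed

lemma inj_R: assumes "fst (snd q) \<noteq> 0" shows "inj (lin3 e1 q e3)"
proof (rule injI)
  fix x y assume h: "lin3 e1 q e3 x = lin3 e1 q e3 y"
  obtain q1 q2 q3 where q: "q = (q1, q2, q3)" by (cases q) auto
  obtain a b c where x: "x = (a, b, c)" by (cases x) auto
  obtain a' b' c' where y: "y = (a', b', c')" by (cases y) auto
  from h have "a + b * q1 = a' + b' * q1" "b * q2 = b' * q2" "c + b * q3 = c' + b' * q3"
    unfolding q x y e1_def e3_def lin3_apply by simp_all
  moreover have "q2 \<noteq> 0" using assms q by simp
  ultimately show "x = y" unfolding x y by simp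
qed



lemma q_a1: assumes "r > 1"
  shows "pnt r 1 (r - 1) = (1 / real r, 1 / real r, (real r - 1) / real r)"
  using pnt1[of r "r - 1"] assms by (simp add: of_nat_diff)

lemma q_am1: assumes "r > 1"
  shows "pnt r (r - 1) 1 = (1 / real r, (real r - 1) / real r, 1 / real r)"
  using pntm1[of r 1] assms by simp

lemma ineq1: assumes "0 < j" "j \<le> r - 2" shows "real j < (real r - 1) * (real r - real j)"
proof -
  have "(r - 1) * 2 \<le> (r - 1) * (r - j)" using assms by (intro mult_le_mono2) auto
  then have "j < (r - 1) * (r - j)" using assms by linarith
  then have "real j < real ((r - 1) * (r - j))" by linarith
  then show ?thesis using assms by (simp add: of_nat_diff)
qed

lemma ineq2: assumes "2 \<le> k" "k < r" shows "real r - real k < (real r - 1) * real k"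
proof -
  have "(r - 1) * 2 \<le> (r - 1) * k" using assms by (intro mult_le_mono2) auto
  then have "r - k < (r - 1) * k" using assms by linarith
  then have "real (r - k) < real ((r - 1) * k)" by linarith
  then show ?thesis using assms by (simp add: of_nat_diff)
qed

lemma excl_a1:
  assumes "0 < j" "j \<le> r - 2"
  shows "\<forall>\<sigma>\<in>simp_fan {e2, e3, pnt r 1 (r - 1)} \<union> simp_fan {e1, pnt r 1 (r - 1), e3}. pnt r 1 j \<notin> \<sigma>"
proof -
  have r: "r > 1" using assms by simp
  have R: "real r > 0" using r by simp
  have p: "pnt r 1 j = ((real r - real j) / real r, (real r - real j) / real r, real j / real r)"
    using pnt1[of r j] assms by simp
  have v: "inner ((- (real r - 1)), 0, 1) (pnt r 1 j) < 0" "inner (0, (- (real r - 1)), 1) (pnt r 1 j) < 0"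
  proof -
    have "inner ((- (real r - 1)), 0, 1) (pnt r 1 j) = (real j - (real r - 1) * (real r - real j)) / real r"
      "inner (0, (- (real r - 1)), 1) (pnt r 1 j) = (real j - (real r - 1) * (real r - real j)) / real r"
      unfolding p using R by (simp_all add: inner_Pair field_simps)
    moreover have "(real j - (real r - 1) * (real r - real j)) / real r < 0"
      using ineq1[OF assms] R by (simp add: divide_neg_pos)
    ultimately show "inner ((- (real r - 1)), 0, 1) (pnt r 1 j) < 0" "inner (0, (- (real r - 1)), 1) (pnt r 1 j) < 0"
      by simp_all
  qed
  have s1: "\<forall>v\<in>{e2, e3, pnt r 1 (r - 1)}. inner ((- (real r - 1)), 0, 1) v \<ge> 0"
    unfolding q_a1[OF r] using R by (simp add: e2_def e3_def inner_Pair field_simps)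
  have s2: "\<forall>v\<in>{e1, pnt r 1 (r - 1), e3}. inner (0, (- (real r - 1)), 1) v \<ge> 0"
    unfolding q_a1[OF r] using R by (simp add: e1_def e3_def inner_Pair field_simps)
  show ?thesis using excl[OF s1 v(1)] excl[OF s2 v(2)] by blast
qed

lemma excl_am1:
  assumes "2 \<le> k" "k < r"
  shows "\<forall>\<sigma>\<in>simp_fan {e2, e3, pnt r (r - 1) 1} \<union> simp_fan {e1, e2, pnt r (r - 1) 1}. pnt r (r - 1) k \<notin> \<sigma>"
proof -
  have r: "r > 1" using assms by simp
  have R: "real r > 0" using r by simp
  have p: "pnt r (r - 1) k = (real k / real r, (real r - real k) / real r, real k / real r)"
    using pntm1[of r k] assms by simp
  have v: "inner ((- (real r - 1)), 1, 0) (pnt r (r - 1) k) < 0" "inner (0, 1, (- (real r - 1))) (pnt r (r - 1) k) < 0"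
  proof -
    have "inner ((- (real r - 1)), 1, 0) (pnt r (r - 1) k) = ((real r - real k) - (real r - 1) * real k) / real r"
      "inner (0, 1, (- (real r - 1))) (pnt r (r - 1) k) = ((real r - real k) - (real r - 1) * real k) / real r"
      unfolding p using R by (simp_all add: inner_Pair field_simps)
    moreover have "((real r - real k) - (real r - 1) * real k) / real r < 0"
      using ineq2[OF assms] R by (simp add: divide_neg_pos)
    ultimately show "inner ((- (real r - 1)), 1, 0) (pnt r (r - 1) k) < 0" "inner (0, 1, (- (real r - 1))) (pnt r (r - 1) k) < 0"
      by simp_all
  qed
  have s1: "\<forall>v\<in>{e2, e3, pnt r (r - 1) 1}. inner ((- (real r - 1)), 1, 0) v \<ge> 0"
    unfolding q_am1[OF r] using R by (simp add: e2_def e3_def inner_Pair field_simps)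
  have s2: "\<forall>v\<in>{e1, e2, pnt r (r - 1) 1}. inner (0, 1, (- (real r - 1))) v \<ge> 0"
    unfolding q_am1[OF r] using R by (simp add: e1_def e2_def inner_Pair field_simps)
  show ?thesis using excl[OF s1 v(1)] excl[OF s2 v(2)] by blast
qed



declare danilov.simps[simp del]

lemma qpos_gen: assumes "fst q > 0" "fst (snd q) > 0" "snd (snd q) > 0"
  shows "\<forall>e\<in>EE. inner e q > 0"
  using assms by (simp add: EE_def inner_e)

lemma dan_base': "danilov (Suc 0) a = faces Delta"
  using dan_base[of a] by (simp del: danilov.simps)

lemma main1: "r \<ge> 1 \<Longrightarrow> danilov r 1 = foldl star_sub (faces Delta) (map (\<lambda>i. pnt r 1 (r - i)) [1..<r])"
proof (induction r rule: less_induct)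
  case (less r)
  show ?case
  proof (cases "r = 1")
    case True
    have "danilov 1 1 = faces Delta" by (rule dan_base)
    then show ?thesis unfolding True by (simp del: danilov.simps)
  next
    case False
    then have r: "r > 1" using less.prems by simp
    define q where "q = pnt r 1 (r - 1)"
    define L where "L = lin3 e1 e2 q"
    define Rm where "Rm = lin3 e1 q e3"
    define N where "N = lin3 e2 e3 q"
    define ps where "ps = map (\<lambda>i. pnt (r - 1) 1 (r - 1 - i)) [1..<r - 1]"
    define D' where "D' = foldl star_sub (faces Delta) ps"
    define A where "A = simp_fan {e2, e3, q} \<union> simp_fan {e1, q, e3}"
    have R: "real r > 1" using r by simp
    have qv: "q = (1 / real r, 1 / real r, (real r - 1) / real r)" unfolding q_def using q_a1[OF r] .
    have linL: "linear L" "linear Rm" "linear N" unfolding L_def Rm_def N_def by (rule linear_lin3)+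
    have injL: "inj L" unfolding L_def by (rule inj_L) (use R in \<open>simp add: qv\<close>)
    have injN: "inj N" unfolding N_def by (rule inj_N) (use R in \<open>simp add: qv\<close>)
    have qpos: "\<forall>e\<in>EE. inner e q > 0" by (rule qpos_gen) (use R in \<open>simp_all add: qv\<close>)
    have D'eq: "danilov (r - 1) (r mod (r - 1)) = D'"
    proof (cases "r = 2")
      case True
      then show ?thesis unfolding D'_def ps_def by (simp add: dan_base dan_base' del: danilov.simps)
    next
      case False
      then have r1: "r - 1 > 1" using r by simp
      have m: "r mod (r - 1) = 1"
      proof -
        obtain k where k: "k = r - 1" by blast
        then have "r = k + 1" "k > 1" using r r1 by auto
        then have "r mod k = 1" by (simp add: mod_Suc)
        then show ?thesis using k by simp
      qed
      have "danilov (r - 1) 1 = D'" unfolding D'_def ps_def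
        using less.IH[of "r - 1"] r by simp
      then show ?thesis using m by simp
    qed
    have lhs: "danilov r 1 = A \<union> (`) L ` D'"
    proof -
      have "danilov r 1 = faces (cone_span {e2, e3, q}) \<union> (`) L ` D' \<union> (`) Rm ` faces Delta"
        using dan_step[of r 1] r D'eq unfolding q_def L_def Rm_def Lmap_lin3 Rmap_lin3
        by (simp add: dan_base dan_base' del: danilov.simps)
      moreover have "faces (cone_span {e2, e3, q}) = simp_fan {e2, e3, q}"
        using faces_simplex[OF linL(3) injN] unfolding N_def lin3_EE .
      moreover have "(`) Rm ` faces Delta = simp_fan {e1, q, e3}"
        using faces_Delta simp_fan_image[OF linL(2), of EE] unfolding Rm_def lin3_EE by simp
      ultimately show ?thesis unfolding A_def by (simp add: Un_ac)
    qed
    have star0: "star_sub (faces Delta) q = A \<union> (`) L ` faces Delta"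
    proof -
      have "(`) L ` faces Delta = simp_fan {e1, e2, q}"
        using faces_Delta simp_fan_image[OF linL(1), of EE] unfolding L_def lin3_EE by simp
      then show ?thesis unfolding star_Delta[OF qpos] A_def by (simp add: Un_ac)
    qed
    have Lp: "pnt r 1 (r - Suc i) = L (pnt (r - 1) 1 (r - 1 - i))" if "i \<in> set [1..<r - 1]" for i
    proof -
      have "r \<ge> 3" "0 < r - 1 - i" "r - 1 - i \<le> r - 2" using that by auto
      from L1[OF this] show ?thesis unfolding L_def q_def Lmap_lin3 by simp
    qed
    have lst: "map (\<lambda>i. pnt r 1 (r - i)) [1..<r] = q # map L ps"
    proof -
      have "[1..<r] = 1 # map Suc [1..<r - 1]" using r by (simp add: upt_conv_Cons map_Suc_upt)
      then have "map (\<lambda>i. pnt r 1 (r - i)) [1..<r] = q # map (\<lambda>i. pnt r 1 (r - Suc i)) [1..<r - 1]"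
        unfolding q_def by simp
      also have "map (\<lambda>i. pnt r 1 (r - Suc i)) [1..<r - 1] = map L ps"
        unfolding ps_def map_map o_def by (rule map_cong[OF refl], rule Lp, assumption)
      finally show ?thesis .
    qed
    have exc: "\<forall>p\<in>set ps. \<forall>\<sigma>\<in>A. L p \<notin> \<sigma>"
    proof
      fix p assume "p \<in> set ps"
      then obtain i where i: "i \<in> set [1..<r - 1]" "p = pnt (r - 1) 1 (r - 1 - i)" unfolding ps_def by auto
      then have "L p = pnt r 1 (r - 1 - i)" using Lp by simp
      moreover have "0 < r - 1 - i" "r - 1 - i \<le> r - 2" using i by auto
      ultimately show "\<forall>\<sigma>\<in>A. L p \<notin> \<sigma>" using excl_a1 unfolding A_def q_def by simp
    qed
    have "foldl star_sub (faces Delta) (map (\<lambda>i. pnt r 1 (r - i)) [1..<r]) = A \<union> (`) L ` D'"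
      unfolding lst D'_def using fold_lift[OF linL(1) injL exc, of "faces Delta"] star0 by simp
    then show ?thesis using lhs by simp
  qed
qed



declare danilov.simps[simp del]

lemma main2: "r \<ge> 1 \<Longrightarrow> danilov r (r - 1) = foldl star_sub (faces Delta) (map (\<lambda>i. pnt r (r - 1) i) [1..<r])"
proof (induction r rule: less_induct)
  case (less r)
  show ?case
  proof (cases "r = 1")
    case True
    have "danilov 1 0 = faces Delta" by (rule dan_base)
    then show ?thesis unfolding True by (simp del: danilov.simps)
  next
    case False
    then have r: "r > 1" using less.prems by simp
    define q where "q = pnt r (r - 1) 1"
    define L where "L = lin3 e1 e2 q"
    define Rm where "Rm = lin3 e1 q e3"
    define N where "N = lin3 e2 e3 q"
    define ps where "ps = map (\<lambda>i. pnt (r - 1) (r - 2) i) [1..<r - 1]"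
    define D' where "D' = foldl star_sub (faces Delta) ps"
    define A where "A = simp_fan {e2, e3, q} \<union> simp_fan {e1, e2, q}"
    have R: "real r > 1" using r by simp
    have qv: "q = (1 / real r, (real r - 1) / real r, 1 / real r)" unfolding q_def using q_am1[OF r] .
    have qd: "r - (r - 1) = 1" using r by simp
    have linL: "linear L" "linear Rm" "linear N" unfolding L_def Rm_def N_def by (rule linear_lin3)+
    have injR: "inj Rm" unfolding Rm_def by (rule inj_R) (use R in \<open>simp add: qv\<close>)
    have injN: "inj N" unfolding N_def by (rule inj_N) (use R in \<open>simp add: qv\<close>)
    have qpos: "\<forall>e\<in>EE. inner e q > 0" by (rule qpos_gen) (use R in \<open>simp_all add: qv\<close>)
    have D'eq: "danilov (r - 1) ((r - 1 - r mod (r - 1)) mod (r - 1)) = D'"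
    proof (cases "r = 2")
      case True
      then show ?thesis unfolding D'_def ps_def by (simp add: dan_base dan_base' del: danilov.simps)
    next
      case False
      then have r1: "r - 1 > 1" using r by simp
      have m: "r mod (r - 1) = 1"
      proof -
        obtain k where k: "k = r - 1" by blast
        then have "r = k + 1" "k > 1" using r r1 by auto
        then have "r mod k = 1" by (simp add: mod_Suc)
        then show ?thesis using k by simp
      qed
      have m2: "(r - 1 - 1) mod (r - 1) = r - 2" using r by simp
      have "danilov (r - 1) (r - 1 - 1) = D'" unfolding D'_def ps_def
        using less.IH[of "r - 1"] r by (simp add: numeral_2_eq_2 del: danilov.simps)
      then show ?thesis using m m2 by (simp add: numeral_2_eq_2 del: danilov.simps)
    qed
    have lhs: "danilov r (r - 1) = A \<union> (`) Rm ` D'"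
    proof -
      have "danilov r (r - 1) = faces (cone_span {e2, e3, q}) \<union> (`) L ` faces Delta \<union> (`) Rm ` D'"
        using dan_step[of r "r - 1"] r D'eq unfolding q_def L_def Rm_def Lmap_lin3 Rmap_lin3 qd
        by (simp add: dan_base dan_base' del: danilov.simps)
      moreover have "faces (cone_span {e2, e3, q}) = simp_fan {e2, e3, q}"
        using faces_simplex[OF linL(3) injN] unfolding N_def lin3_EE .
      moreover have "(`) L ` faces Delta = simp_fan {e1, e2, q}"
        using faces_Delta simp_fan_image[OF linL(1), of EE] unfolding L_def lin3_EE by simp
      ultimately show ?thesis unfolding A_def by (simp add: Un_ac)
    qed
    have star0: "star_sub (faces Delta) q = A \<union> (`) Rm ` faces Delta"
    proof -
      have "(`) Rm ` faces Delta = simp_fan {e1, q, e3}"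
        using faces_Delta simp_fan_image[OF linL(2), of EE] unfolding Rm_def lin3_EE by simp
      then show ?thesis unfolding star_Delta[OF qpos] A_def by (simp add: Un_ac)
    qed
    have Rp: "pnt r (r - 1) (Suc i) = Rm (pnt (r - 1) (r - 2) i)" if "i \<in> set [1..<r - 1]" for i
    proof -
      have "r \<ge> 3" "0 < i" "i \<le> r - 2" using that by auto
      from R1[OF this] show ?thesis unfolding Rm_def q_def Rmap_lin3 qd by simp
    qed
    have lst: "map (\<lambda>i. pnt r (r - 1) i) [1..<r] = q # map Rm ps"
    proof -
      have "[1..<r] = 1 # map Suc [1..<r - 1]" using r by (simp add: upt_conv_Cons map_Suc_upt)
      then have "map (\<lambda>i. pnt r (r - 1) i) [1..<r] = q # map (\<lambda>i. pnt r (r - 1) (Suc i)) [1..<r - 1]"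
        unfolding q_def by simp
      also have "map (\<lambda>i. pnt r (r - 1) (Suc i)) [1..<r - 1] = map Rm ps"
        unfolding ps_def map_map o_def by (rule map_cong[OF refl], rule Rp, assumption)
      finally show ?thesis .
    qed
    have exc: "\<forall>p\<in>set ps. \<forall>\<sigma>\<in>A. Rm p \<notin> \<sigma>"
    proof
      fix p assume "p \<in> set ps"
      then obtain i where i: "i \<in> set [1..<r - 1]" "p = pnt (r - 1) (r - 2) i" unfolding ps_def by auto
      then have "Rm p = pnt r (r - 1) (Suc i)" using Rp by simp
      moreover have "2 \<le> Suc i" "Suc i < r" using i by auto
      ultimately show "\<forall>\<sigma>\<in>A. Rm p \<notin> \<sigma>" using excl_am1 unfolding A_def q_def by simp
    qed
    have "foldl star_sub (faces Delta) (map (\<lambda>i. pnt r (r - 1) i) [1..<r]) = A \<union> (`) Rm ` D'"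
      unfolding lst D'_def using fold_lift[OF linL(2) injR exc, of "faces Delta"] star0 by simp
    then show ?thesis using lhs by simp
  qed
qed


theorem mainTheorem2:
  fixes r :: nat
  assumes "r > 1"
  shows "danilov r 1 = foldl star_sub (faces Delta) (map (\<lambda>i. pnt r 1 (r - i)) [1..<r])
       \<and> danilov r (r - 1) = foldl star_sub (faces Delta) (map (\<lambda>i. pnt r (r - 1) i) [1..<r])"
  using main1[of r] main2[of r] assms by simp

end
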